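(* Under the hypotheses and notation of the following setting, let $0 \le \mathcal{Q}_l \le \mathcal{Q}_u < \mathbf{C}_0(N_0)$ and let $\bar{x}_l$ and $\bar{x}_u$ be the coordinates returned by the hierarchical search procedure on queries $\mathcal{Q}_l$ and $\mathcal{Q}_u$ respectively. Then $\big|\,(\mathbf{C}(\bar{x}_u) - \mathbf{C}(\bar{x}_l)) - (\mathcal{Q}_u - \mathcal{Q}_l)\,\big| < \Delta_{d-1}$. Consequently, if queries $\mathcal{Q}_0 \le \mathcal{Q}_1 \le \cdots$ are equally spaced with spacing $s$ (and all lie in $[0,\mathbf{C}_0(N_0))$), then for any two consecutive partitions $[\bar{x}^{(p)}, \bar{x}^{(p+1)})$ and $[\bar{x}^{(q)}, \bar{x}^{(q+1)})$ the costs $\mathbf{C}(\bar{x}^{(p+1)})-\mathbf{C}(\bar{x}^{(p)})$ and $\mathbf{C}(\bar{x}^{(q+1)})-\mathbf{C}(\bar{x}^{(q)})$ differ by less than $2\Delta_{d-1}$.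
   Context: Setting: $d \ge 1$, positive integers $N_0,\ldots,N_{d-1}$. For each $m$ and each prefix $\bar{x}_m=(x_0,\ldots,x_{m-1})$ with $x_k\in\{0,\ldots,N_k-1\}$, a cost function $\mathbf{C}_m(\cdot\mid\bar{x}_m):\{0,\ldots,N_m\}\to\mathbb{R}_{\ge0}$ with $\mathbf{C}_m(0\mid\bar{x}_m)=0$, monotone ($\mathbf{C}_m(x\mid\bar{x}_m)\le\mathbf{C}_m(x+1\mid\bar{x}_m)$), and hierarchically consistent: for $m<d-1$ and $x_m\in\{0,\ldots,N_m-1\}$, $\mathbf{C}_m(x_m+1\mid\bar{x}_m)=\mathbf{C}_m(x_m\mid\bar{x}_m)+\mathbf{C}_{m+1}(N_{m+1}\mid\bar{x}_m,x_m)$. $\Delta_{d-1}$ is the maximum of $\mathbf{C}_{d-1}(x+1\mid\bar{x}_{d-1})-\mathbf{C}_{d-1}(x\mid\bar{x}_{d-1})$ over all prefixes $\bar{x}_{d-1}$ and $0\le x<N_{d-1}$. For $\bar{x}=(x_0,\ldots,x_{d-1})$, $\mathbf{C}(\bar{x})=\sum_{m=0}^{d-1}\mathbf{C}_m(x_m\mid x_0,\ldots,x_{m-1})$. The hierarchical search procedure on query $\mathcal{Q}$: set $\mathcal{R}_0=\mathcal{Q}$; for $m=0,\ldots,d-1$, let $x_m$ be the largest $x\in\{0,\ldots,N_m-1\}$ with $\mathbf{C}_m(x\mid x_0,\ldots,x_{m-1})\le\mathcal{R}_m$ and set $\mathcal{R}_{m+1}=\mathcal{R}_m-\mathbf{C}_m(x_m\mid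 x_0,\ldots,x_{m-1})$; return $(x_0,\ldots,x_{d-1})$. *)

theory Defs
  imports Complex_Main
begin

text \<open>Cost functions are modelled as C :: nat => nat list => nat => real,
  where C m xs x stands for C_m(x | xs), xs being the prefix (x_0,...,x_{m-1}).\<close>

definition valid_prefix :: "(nat \<Rightarrow> nat) \<Rightarrow> nat \<Rightarrow> nat list \<Rightarrow> bool" where
  "valid_prefix N m xs \<longleftrightarrow> length xs = m \<and> (\<forall>k<m. xs ! k < N k)"

definition hier_costs :: "nat \<Rightarrow> (nat \<Rightarrow> nat) \<Rightarrow> (nat \<Rightarrow> nat list \<Rightarrow> nat \<Rightarrow> real) \<Rightarrow> bool" where
  "hier_costs d N C \<longleftrightarrow>
     d \<ge> 1 \<and> (\<forall>k<d. N k > 0) \<and>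
     (\<forall>m<d. \<forall>xs. valid_prefix N m xs \<longrightarrow>
        C m xs 0 = 0 \<and>
        (\<forall>x\<le>N m. C m xs x \<ge> 0) \<and>
        (\<forall>x<N m. C m xs x \<le> C m xs (Suc x)) \<and>
        (m < d - 1 \<longrightarrow> (\<forall>x<N m. C m xs (Suc x) = C m xs x + C (Suc m) (xs @ [x]) (N (Suc m)))))"

definition Delta :: "nat \<Rightarrow> (nat \<Rightarrow> nat) \<Rightarrow> (nat \<Rightarrow> nat list \<Rightarrow> nat \<Rightarrow> real) \<Rightarrow> real" where
  "Delta d N C = Max {C (d - 1) xs (Suc x) - C (d - 1) xs x | xs x.
                        valid_prefix N (d - 1) xs \<and> x < N (d - 1)}"

definition total_cost :: "(nat \<Rightarrow> nat list \<Rightarrow> nat \<Rightarrow> real) \<Rightarrow> nat list \<Rightarrow> real" where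
  "total_cost C xs = (\<Sum>m<length xs. C m (take m xs) (xs ! m))"

text \<open>Hierarchical search: k remaining levels, current level m, prefix xs, residual R.\<close>
primrec hsearch_aux :: "(nat \<Rightarrow> nat) \<Rightarrow> (nat \<Rightarrow> nat list \<Rightarrow> nat \<Rightarrow> real) \<Rightarrow> nat \<Rightarrow> nat \<Rightarrow> nat list \<Rightarrow> real \<Rightarrow> nat list" where
  "hsearch_aux N C 0 m xs R = xs"
| "hsearch_aux N C (Suc k) m xs R =
     (let x = Max {x. x < N m \<and> C m xs x \<le> R}
      in hsearch_aux N C k (Suc m) (xs @ [x]) (R - C m xs x))"

definition hsearch :: "nat \<Rightarrow> (nat \<Rightarrow> nat) \<Rightarrow> (nat \<Rightarrow> nat list \<Rightarrow> nat \<Rightarrow> real) \<Rightarrow> real \<Rightarrow> nat list" where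
  "hsearch d N C Q = hsearch_aux N C d 0 [] Q"

end

theory Submission
  imports Defs
begin

lemma total_cost_snoc: "total_cost C (xs @ [x]) = total_cost C xs + C (length xs) xs x"
proof -
  have "total_cost C (xs @ [x]) = (\<Sum>m<Suc (length xs). C m (take m (xs @ [x])) ((xs @ [x]) ! m))"
    by (simp add: total_cost_def)
  also have "\<dots> = (\<Sum>m<length xs. C m (take m (xs @ [x])) ((xs @ [x]) ! m)) + C (length xs) xs x"
    by simp
  also have "(\<Sum>m<length xs. C m (take m (xs @ [x])) ((xs @ [x]) ! m)) = total_cost C xs"
    unfolding total_cost_def by (intro sum.cong) (auto simp: nth_append)
  finally show ?thesis .
qed

lemma step_lemma:
  assumes hyp: "hier_costs d N C" and vp: "valid_prefix N m xs" and md: "m < d"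
    and R0: "0 \<le> R" and R1: "R < C m xs (N m)"
    and xdef: "x = Max {x. x < N m \<and> C m xs x \<le> R}"
  shows "x < N m \<and> 0 \<le> R - C m xs x \<and> R < C m xs (Suc x)"
proof -
  let ?S = "{x. x < N m \<and> C m xs x \<le> R}"
  have Npos: "N m > 0" using hyp md by (simp add: hier_costs_def)
  have C0: "C m xs 0 = 0" using hyp md vp by (simp add: hier_costs_def)
  have fin: "finite ?S" by (rule finite_subset[of _ "{..<N m}"]) auto
  have ne: "0 \<in> ?S" using Npos C0 R0 by simp
  have xin: "x \<in> ?S" using fin ne xdef Max_in by blast
  have xmax: "\<And>y. y \<in> ?S \<Longrightarrow> y \<le> x" using fin xdef by simp
  have "R < C m xs (Suc x)"
  proof (cases "Suc x < N m")
    case True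
    then have "Suc x \<notin> ?S" using xmax by fastforce
    then show ?thesis using True by auto
  next
    case False
    then have "Suc x = N m" using xin by auto
    then show ?thesis using R1 by simp
  qed
  then show ?thesis using xin by auto
qed

lemma delta_bound:
  assumes hyp: "hier_costs d N C" and vp: "valid_prefix N (d - 1) xs" and x: "x < N (d - 1)"
  shows "C (d - 1) xs (Suc x) - C (d - 1) xs x \<le> Delta d N C"
proof -
  let ?P = "{xs. valid_prefix N (d - 1) xs}"
  have "?P \<subseteq> {xs. set xs \<subseteq> {..<(\<Sum>k<d - 1. N k)} \<and> length xs = d - 1}"
  proof
    fix ys assume "ys \<in> ?P"
    then have l: "length ys = d - 1" and b: "\<forall>k<d - 1. ys ! k < N k"
      by (auto simp: valid_prefix_def)
    have "set ys \<subseteq> {..<(\<Sum>k<d - 1. N k)}"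
    proof
      fix z assume "z \<in> set ys"
      then obtain k where k: "k < length ys" "ys ! k = z" by (auto simp: in_set_conv_nth)
      have "N k \<le> (\<Sum>k<d - 1. N k)" using k l by (intro member_le_sum) auto
      then show "z \<in> {..<(\<Sum>k<d - 1. N k)}" using b k l by auto
    qed
    then show "ys \<in> {xs. set xs \<subseteq> {..<(\<Sum>k<d - 1. N k)} \<and> length xs = d - 1}" using l by auto
  qed
  then have finP: "finite ?P" by (rule finite_subset) (rule finite_lists_length_eq, simp)
  have eq: "{C (d - 1) xs (Suc x) - C (d - 1) xs x | xs x. valid_prefix N (d - 1) xs \<and> x < N (d - 1)}
     = (\<lambda>(xs, x). C (d - 1) xs (Suc x) - C (d - 1) xs x) ` (?P \<times> {..<N (d - 1)})"
    by auto
  have fin: "finite {C (d - 1) xs (Suc x) - C (d - 1) xs x | xs x. valid_prefix N (d - 1) xs \<and> x < N (d - 1)}"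
    unfolding eq using finP by auto
  show ?thesis unfolding Delta_def
    by (rule Max_ge[OF fin]) (use vp x in blast)
qed

lemma search_inv:
  assumes hyp: "hier_costs d N C"
  shows "valid_prefix N m xs \<Longrightarrow> m + Suc k = d \<Longrightarrow> 0 \<le> R \<Longrightarrow> R < C m xs (N m) \<Longrightarrow>
    0 \<le> total_cost C xs + R - total_cost C (hsearch_aux N C (Suc k) m xs R) \<and>
    total_cost C xs + R - total_cost C (hsearch_aux N C (Suc k) m xs R) < Delta d N C"
proof (induction k arbitrary: m xs R)
  case 0
  define x where "x = Max {x. x < N m \<and> C m xs x \<le> R}"
  have s: "x < N m \<and> 0 \<le> R - C m xs x \<and> R < C m xs (Suc x)"
    using step_lemma[OF hyp 0(1) _ 0(3) 0(4) x_def] 0(2) by simp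
  have md: "m = d - 1" using 0 by simp
  have lm: "length xs = m" using 0(1) by (simp add: valid_prefix_def)
  have "C m xs (Suc x) - C m xs x \<le> Delta d N C"
    using delta_bound[OF hyp, of xs x] 0(1) s md by simp
  then show ?case using s lm by (simp add: Let_def x_def[symmetric] total_cost_snoc)
next
  case (Suc k)
  define x where "x = Max {x. x < N m \<and> C m xs x \<le> R}"
  have s: "x < N m \<and> 0 \<le> R - C m xs x \<and> R < C m xs (Suc x)"
    using step_lemma[OF hyp Suc(2) _ Suc(4) Suc(5) x_def] Suc(3) by simp
  have lm: "length xs = m" using Suc(2) by (simp add: valid_prefix_def)
  have vp': "valid_prefix N (Suc m) (xs @ [x])"
    using Suc(2) s by (auto simp: valid_prefix_def nth_append less_Suc_eq)
  have rec: "C m xs (Suc x) = C m xs x + C (Suc m) (xs @ [x]) (N (Suc m))"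
    using hyp Suc(2,3) s by (auto simp: hier_costs_def)
  have IH: "0 \<le> total_cost C (xs @ [x]) + (R - C m xs x) - total_cost C (hsearch_aux N C (Suc k) (Suc m) (xs @ [x]) (R - C m xs x)) \<and>
    total_cost C (xs @ [x]) + (R - C m xs x) - total_cost C (hsearch_aux N C (Suc k) (Suc m) (xs @ [x]) (R - C m xs x)) < Delta d N C"
    using Suc.IH[OF vp'] Suc(3) s rec by simp
  then show ?case using lm by (simp add: Let_def x_def[symmetric] total_cost_snoc)
qed

lemma search_bound:
  assumes hyp: "hier_costs d N C" and "0 \<le> Q" "Q < C 0 [] (N 0)"
  shows "0 \<le> Q - total_cost C (hsearch d N C Q) \<and> Q - total_cost C (hsearch d N C Q) < Delta d N C"
proof -
  obtain k where d: "d = Suc k" using hyp by (cases d) (auto simp: hier_costs_def)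
  have "valid_prefix N 0 []" by (simp add: valid_prefix_def)
  from search_inv[OF hyp this, of k Q] assms d show ?thesis
    by (simp add: hsearch_def total_cost_def)
qed

theorem mainTheorem2:
  fixes d :: nat and N :: "nat \<Rightarrow> nat" and C :: "nat \<Rightarrow> nat list \<Rightarrow> nat \<Rightarrow> real"
  assumes hyp: "hier_costs d N C"
  shows "(\<forall>Ql Qu :: real. 0 \<le> Ql \<longrightarrow> Ql \<le> Qu \<longrightarrow> Qu < C 0 [] (N 0) \<longrightarrow>
            \<bar>(total_cost C (hsearch d N C Qu) - total_cost C (hsearch d N C Ql)) - (Qu - Ql)\<bar>
              < Delta d N C)
       \<and> (\<forall>(Q :: nat \<Rightarrow> real) (s :: real) p q.
            s \<ge> 0 \<longrightarrow> (\<forall>i. Q (Suc i) = Q i + s) \<longrightarrow>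
            (\<forall>i\<in>{p, Suc p, q, Suc q}. 0 \<le> Q i \<and> Q i < C 0 [] (N 0)) \<longrightarrow>
            \<bar>(total_cost C (hsearch d N C (Q (Suc p))) - total_cost C (hsearch d N C (Q p)))
             - (total_cost C (hsearch d N C (Q (Suc q))) - total_cost C (hsearch d N C (Q q)))\<bar>
              < 2 * Delta d N C)"
proof (intro conjI allI impI)
  fix Ql Qu :: real
  assume "0 \<le> Ql" "Ql \<le> Qu" "Qu < C 0 [] (N 0)"
  then have "0 \<le> Qu" "Ql < C 0 [] (N 0)" by auto
  with search_bound[OF hyp] \<open>0 \<le> Ql\<close> \<open>Qu < C 0 [] (N 0)\<close>
  show "\<bar>(total_cost C (hsearch d N C Qu) - total_cost C (hsearch d N C Ql)) - (Qu - Ql)\<bar> < Delta d N C"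
    by (smt (verit))
next
  fix Q :: "nat \<Rightarrow> real" and s :: real and p q :: nat
  assume "0 \<le> s" and QS: "\<forall>i. Q (Suc i) = Q i + s"
    and B: "\<forall>i\<in>{p, Suc p, q, Suc q}. 0 \<le> Q i \<and> Q i < C 0 [] (N 0)"
  have b: "\<And>i. i \<in> {p, Suc p, q, Suc q} \<Longrightarrow> 0 \<le> Q i - total_cost C (hsearch d N C (Q i)) \<and>
     Q i - total_cost C (hsearch d N C (Q i)) < Delta d N C"
    using B search_bound[OF hyp] by blast
  have "Q (Suc p) = Q p + s" "Q (Suc q) = Q q + s" using QS by auto
  with b[of p] b[of "Suc p"] b[of q] b[of "Suc q"]
  show "\<bar>(total_cost C (hsearch d N C (Q (Suc p))) - total_cost C (hsearch d N C (Q p)))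
             - (total_cost C (hsearch d N C (Q (Suc q))) - total_cost C (hsearch d N C (Q q)))\<bar>
              < 2 * Delta d N C" by auto
qed

end
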